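(* Under the setting described in the context, there is a constant $c>0$, depending only on $\psi$, $\mu$ and $d$, such that for all $0<h\le 1$, $$\left\|\left(\int_{\Omega}\psi_h(\cdot-t)\,d\mu(t)\right)^{-1}\right\|_{L^\infty(\Omega)}\le c,$$ equivalently $\int_\Omega \psi_h(x-t)\,d\mu(t)\ge 1/c$ for all $x\in\Omega$.
   Context: Let $d\ge 1$ and let $\Omega\subset\mathbb{R}^d$ be a compact convex domain with Lipschitz boundary. Let $\mu$ be a probability measure on $\Omega$ such that: (1) there is a constant $C_1>0$, depending only on $\mu$ and $d$, with $\mu(\Omega\cap B(x,\alpha))\ge C_1\, m(B(x,\alpha))$ for all $x\in\Omega$ and $0<\alpha\le 1$, where $B(x,\alpha)$ is the Euclidean ball of radius $\alpha$ centered at $x$ and $m$ is Lebesgue measure; (2) $\mu$ extends to a finite positive measure $\mu^*$ on $\mathbb{R}^d$ whose Fourier transform belongs to $L^1(\mathbb{R}^d)$. Let $\psi\in C(\mathbb{R}^d)$ be nonnegative with $\int_{\mathbb{R}^d}\psi=1$, $\int_{\mathbb{R}^d}|x|\psi(x)\,dx<\infty$, and $\psi(x)\ge C_\psi>0$ for all $|x|\le 1$. For $h>0$ set $\psi_h(x)=h^{-d}\psi(x/h)$. *)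

theory Defs
  imports "HOL-Probability.Probability"
begin

definition fourier_measure :: "'a::euclidean_space measure \<Rightarrow> 'a \<Rightarrow> complex" where
  "fourier_measure N \<xi> = (\<integral>x. cis (- (\<xi> \<bullet> x)) \<partial>N)"

definition scaled_kernel :: "('a::euclidean_space \<Rightarrow> real) \<Rightarrow> real \<Rightarrow> 'a \<Rightarrow> real" where
  "scaled_kernel \<psi> h x = \<psi> ((1 / h) *\<^sub>R x) / h ^ DIM('a)"

end

theory Submission
  imports Defs "HOL-Analysis.Analysis"
begin

theorem lemma2p2:
  fixes \<Omega> :: "'a::euclidean_space set"
    and M N :: "'a measure"
    and \<psi> :: "'a \<Rightarrow> real"
    and C\<^sub>1 C\<^sub>\<psi> :: real
  assumes \<Omega>_compact: "compact \<Omega>"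
    and \<Omega>_convex: "convex \<Omega>"
    and \<Omega>_domain: "interior \<Omega> \<noteq> {}"
    and M_sets: "sets M = sets borel"
    and M_prob: "prob_space M"
    and M_on_\<Omega>: "emeasure M (UNIV - \<Omega>) = 0"
    and C1_pos: "C\<^sub>1 > 0"
    and M_lower: "\<And>x \<alpha>. x \<in> \<Omega> \<Longrightarrow> 0 < \<alpha> \<Longrightarrow> \<alpha> \<le> 1 \<Longrightarrow>
        measure M (\<Omega> \<inter> ball x \<alpha>) \<ge> C\<^sub>1 * measure lborel (ball x \<alpha>)"
    and N_sets: "sets N = sets borel"
    and N_finite: "finite_measure N"
    and N_extends: "\<And>A. A \<in> sets borel \<Longrightarrow> A \<subseteq> \<Omega> \<Longrightarrow> emeasure N A = emeasure M A"
    and N_fourier: "integrable lborel (fourier_measure N)"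
    and \<psi>_cont: "continuous_on UNIV \<psi>"
    and \<psi>_nonneg: "\<And>x. \<psi> x \<ge> 0"
    and \<psi>_int: "integrable lborel \<psi>"
    and \<psi>_int1: "(\<integral>x. \<psi> x \<partial>lborel) = 1"
    and \<psi>_moment: "integrable lborel (\<lambda>x. norm x * \<psi> x)"
    and C\<psi>_pos: "C\<^sub>\<psi> > 0"
    and \<psi>_lower: "\<And>x. norm x \<le> 1 \<Longrightarrow> \<psi> x \<ge> C\<^sub>\<psi>"
  shows "\<exists>c>0. \<forall>h. 0 < h \<and> h \<le> 1 \<longrightarrow>
           (\<forall>x\<in>\<Omega>. (\<integral>t\<in>\<Omega>. scaled_kernel \<psi> h (x - t) \<partial>M) \<ge> 1 / c)"
proof -
  interpret P: prob_space M by (rule M_prob)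
  define d where "d = DIM('a)"
  define V where "V = unit_ball_vol (real d)"
  have Vpos: "V > 0" unfolding V_def by simp
  define c where "c = 1 / (C\<^sub>\<psi> * C\<^sub>1 * V)"
  have cpos: "c > 0" unfolding c_def using Vpos C1_pos C\<psi>_pos by simp
  have Omeas: "\<Omega> \<in> sets M" using M_sets borel_closed[OF compact_imp_closed[OF \<Omega>_compact]] by simp
  show ?thesis
  proof (intro exI[of _ c] conjI cpos allI impI ballI)
    fix h :: real and x assume h: "0 < h \<and> h \<le> 1" and x: "x \<in> \<Omega>"
    define f where "f = (\<lambda>t. scaled_kernel \<psi> h (x - t))"
    have fcont: "continuous_on UNIV f" unfolding f_def scaled_kernel_def
      using h by (intro continuous_intros continuous_on_compose2[OF \<psi>_cont]) auto
    have fmeas: "f \<in> borel_measurable M"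
      using borel_measurable_continuous_onI[OF fcont] measurable_cong_sets[OF M_sets refl] by blast
    have "compact (f ` \<Omega>)" using compact_continuous_image[OF continuous_on_subset[OF fcont] \<Omega>_compact] by simp
    then obtain B where B: "\<And>t. t \<in> \<Omega> \<Longrightarrow> norm (f t) \<le> B"
      using compact_imp_bounded bounded_iff by (metis image_eqI)
    have int1: "integrable M (\<lambda>t. indicator \<Omega> t *\<^sub>R f t)"
    proof (rule P.integrable_const_bound[where B=B])
      show "AE t in M. norm (indicator \<Omega> t *\<^sub>R f t) \<le> B"
        using B x by (intro AE_I2) (auto simp: indicator_def intro: order_trans[OF norm_ge_zero B[OF x]])
      show "(\<lambda>t. indicator \<Omega> t *\<^sub>R f t) \<in> borel_measurable M"
        using fmeas Omeas by measurable
    qed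
    define K where "K = C\<^sub>\<psi> / h ^ d"
    have Kpos: "K > 0" unfolding K_def using h C\<psi>_pos by simp
    have Smeas: "\<Omega> \<inter> ball x h \<in> sets M" using Omeas M_sets by auto
    have int2: "integrable M (\<lambda>t. indicator (\<Omega> \<inter> ball x h) t * K)"
      using Smeas by (simp add: integrable_indicator_iff) (metis P.emeasure_finite top.not_eq_extremum)
    have le: "indicator (\<Omega> \<inter> ball x h) t * K \<le> indicator \<Omega> t *\<^sub>R f t" for t
    proof (cases "t \<in> \<Omega> \<inter> ball x h")
      case True
      then have "norm (x - t) < h" by (simp add: dist_norm)
      then have "norm ((1/h) *\<^sub>R (x - t)) \<le> 1" using h by (simp only: norm_scaleR) (simp add: field_simps)
      then have "\<psi> ((1/h) *\<^sub>R (x - t)) \<ge> C\<^sub>\<psi>" by (rule \<psi>_lower)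
      then have "C\<^sub>\<psi> / h ^ d \<le> \<psi> ((1/h) *\<^sub>R (x - t)) / h ^ d"
        using h by (simp add: divide_right_mono)
      then show ?thesis using True by (simp add: f_def scaled_kernel_def K_def d_def)
    next
      case False
      have "f t \<ge> 0" unfolding f_def scaled_kernel_def using h \<psi>_nonneg by simp
      then show ?thesis using False by (simp add: indicator_def)
    qed
    have "(\<integral>t. indicator (\<Omega> \<inter> ball x h) t * K \<partial>M) \<le> (\<integral>t. indicator \<Omega> t *\<^sub>R f t \<partial>M)"
      by (rule integral_mono[OF int2 int1 le])
    moreover have "(\<integral>t. indicator (\<Omega> \<inter> ball x h) t * K \<partial>M) = measure M (\<Omega> \<inter> ball x h) * K"
      using Smeas by simp
    moreover have "measure M (\<Omega> \<inter> ball x h) \<ge> C\<^sub>1 * (V * h ^ d)"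
      using M_lower[OF x, of h] h content_ball[of h x] by (simp add: V_def d_def)
    moreover have "C\<^sub>1 * (V * h ^ d) * K = 1 / c"
      unfolding K_def c_def using h by (simp add: field_simps)
    ultimately have "1 / c \<le> (\<integral>t. indicator \<Omega> t *\<^sub>R f t \<partial>M)"
      using Kpos by (smt (verit, best) mult_right_mono)
    then show "(\<integral>t\<in>\<Omega>. scaled_kernel \<psi> h (x - t) \<partial>M) \<ge> 1 / c"
      by (simp add: set_lebesgue_integral_def f_def)
  qed
qed

end
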